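(* Let $\mathscr{A}$ be the apartment of a maximal split torus of $\mathscr{G}=\mathbf{G}(k)$, where $k$ is a non-archimedean local field and $\mathbf{G}$ is a connected, $k$-split, absolutely quasisimple group of rank $\ell$, and fix a chamber $C_0$ of $\mathscr{A}$. Let $\mathcal{X}=\{\pm\psi_1,\dots,\pm\psi_k\}$ be a permissible set of affine root pairs. Then the number of chambers $D$ of $\mathscr{A}$ which are incident with $\mathcal{X}$ and satisfy $c(D)=\{H_{\pm\psi_i}\cap D: 1\le i\le k\}$ is finite.
   Context: $\Psi$ denotes the affine root system on $\mathscr{A}$; for $\psi\in\Psi$, $H_{\pm\psi}$ is its zero hyperplane. A nonempty set of affine root pairs $\mathcal{X}=\{\pm\psi_1,\dots,\pm\psi_k\}$ is permissible if (choosing one root from each pair) $\mathrm{grad}(\psi_1),\dots,\mathrm{grad}(\psi_k)$ are linearly independent and there exists a chamber $D$ such that each $H_{\pm\psi_i}\cap D$ is a face (codimension-one facet) of $D$; such a chamber $D$ is said to be incident with $\mathcal{X}$. For a chamber $D$, $\mathrm{ht}_{C_0}(D)$ is the number of affine root hyperplanes separating $C_0$ and $D$, and $c(D)$ is the set of faces $F$ of $D$ such that the chamber obtained by reflecting $D$ across $F$ has height $\mathrm{ht}_{C_0}(D)+1$. *)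

theory Defs
  imports "HOL-Analysis.Analysis"
begin

text \<open>The apartment is modelled as a Euclidean space 'a of dimension l (the rank),
with the (finite, reduced, crystallographic, irreducible, spanning) root system R
of the split group identified with vectors via the inner product.\<close>

definition reduced_irreducible_root_system :: "'a::euclidean_space set \<Rightarrow> bool" where
  "reduced_irreducible_root_system R \<longleftrightarrow>
     finite R \<and> 0 \<notin> R \<and> span R = UNIV \<and>
     (\<forall>a\<in>R. \<forall>b\<in>R. b - (2 * (b \<bullet> a) / (a \<bullet> a)) *\<^sub>R a \<in> R) \<and>
     (\<forall>a\<in>R. \<forall>b\<in>R. 2 * (b \<bullet> a) / (a \<bullet> a) \<in> \<int>) \<and>
     (\<forall>a\<in>R. \<forall>c::real. c *\<^sub>R a \<in> R \<longrightarrow> c = 1 \<or> c = -1) \<and>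
     \<not> (\<exists>R1 R2. R1 \<noteq> {} \<and> R2 \<noteq> {} \<and> R1 \<union> R2 = R \<and> R1 \<inter> R2 = {} \<and>
              (\<forall>a\<in>R1. \<forall>b\<in>R2. a \<bullet> b = 0))"

definition affine_roots :: "'a::euclidean_space set \<Rightarrow> ('a \<times> int) set" where
  "affine_roots R = R \<times> UNIV"

definition aff_eval :: "'a::euclidean_space \<times> int \<Rightarrow> 'a \<Rightarrow> real" where
  "aff_eval psi x = fst psi \<bullet> x + real_of_int (snd psi)"

definition grad :: "'a::euclidean_space \<times> int \<Rightarrow> 'a" where
  "grad psi = fst psi"

definition hyp :: "'a::euclidean_space \<times> int \<Rightarrow> 'a set" where
  "hyp psi = {x. aff_eval psi x = 0}"

definition chamber :: "'a::euclidean_space set \<Rightarrow> 'a set \<Rightarrow> bool" where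
  "chamber R D \<longleftrightarrow> D \<in> components (UNIV - (\<Union>psi\<in>affine_roots R. hyp psi))"

definition is_face_hyp :: "'a::euclidean_space set \<Rightarrow> 'a set \<Rightarrow> 'a \<times> int \<Rightarrow> bool" where
  "is_face_hyp R D psi \<longleftrightarrow> psi \<in> affine_roots R \<and>
      aff_dim (hyp psi \<inter> closure D) = int DIM('a) - 1"

definition incident :: "'a::euclidean_space set \<Rightarrow> ('a \<times> int) list \<Rightarrow> 'a set \<Rightarrow> bool" where
  "incident R X D \<longleftrightarrow> chamber R D \<and> (\<forall>psi\<in>set X. is_face_hyp R D psi)"

text \<open>X = [psi_1,...,psi_k] represents the set of pairs {\<plusminus>psi_1,...,\<plusminus>psi_k}
  (one root chosen from each pair).\<close>
definition permissible :: "'a::euclidean_space set \<Rightarrow> ('a \<times> int) list \<Rightarrow> bool" where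
  "permissible R X \<longleftrightarrow> X \<noteq> [] \<and> set X \<subseteq> affine_roots R \<and>
      distinct (map grad X) \<and> independent (set (map grad X)) \<and>
      (\<exists>D. incident R X D)"

definition separates :: "'a::euclidean_space \<times> int \<Rightarrow> 'a set \<Rightarrow> 'a set \<Rightarrow> bool" where
  "separates psi C D \<longleftrightarrow>
     ((\<forall>x\<in>C. aff_eval psi x > 0) \<and> (\<forall>x\<in>D. aff_eval psi x < 0)) \<or>
     ((\<forall>x\<in>C. aff_eval psi x < 0) \<and> (\<forall>x\<in>D. aff_eval psi x > 0))"

definition ht :: "'a::euclidean_space set \<Rightarrow> 'a set \<Rightarrow> 'a set \<Rightarrow> nat" where
  "ht R C0 D = card {H. \<exists>psi\<in>affine_roots R. H = hyp psi \<and> separates psi C0 D}"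

definition aff_refl :: "'a::euclidean_space \<times> int \<Rightarrow> 'a \<Rightarrow> 'a" where
  "aff_refl psi x = x - (2 * aff_eval psi x / (fst psi \<bullet> fst psi)) *\<^sub>R fst psi"

definition cfaces :: "'a::euclidean_space set \<Rightarrow> 'a set \<Rightarrow> 'a set \<Rightarrow> 'a set set" where
  "cfaces R C0 D = {hyp psi \<inter> closure D | psi. is_face_hyp R D psi \<and>
       ht R C0 (aff_refl psi ` D) = ht R C0 D + 1}"

end

theory Submission
  imports Defs
begin

locale rsys =
  fixes R :: "'a::euclidean_space set"
  assumes rs: "reduced_irreducible_root_system R"
begin

definition A where "A = affine_roots R"
definition HU where "HU = (\<Union>psi\<in>A. hyp psi)"
definition E where "E p = {x. \<forall>psi\<in>A. sgn (aff_eval psi x) = sgn (aff_eval psi p)}"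

lemma rs': "finite R \<and> 0 \<notin> R \<and> span R = UNIV \<and>
     (\<forall>a\<in>R. \<forall>b\<in>R. b - (2 * (b \<bullet> a) / (a \<bullet> a)) *\<^sub>R a \<in> R) \<and>
     (\<forall>a\<in>R. \<forall>b\<in>R. 2 * (b \<bullet> a) / (a \<bullet> a) \<in> \<int>) \<and> True"
  using rs unfolding reduced_irreducible_root_system_def by (elim conjE) (intro conjI TrueI)
lemma finR: "finite R" using rs' by (rule conjunct1)
lemma zeroR: "0 \<notin> R" using rs' by (elim conjE)
lemma spanR: "span R = UNIV" using rs' by (elim conjE)
lemma reflR: "a \<in> R \<Longrightarrow> b \<in> R \<Longrightarrow> b - (2 * (b \<bullet> a) / (a \<bullet> a)) *\<^sub>R a \<in> R"
  using rs' by (elim conjE) (simp only: Ball_def)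
lemma intR: "a \<in> R \<Longrightarrow> b \<in> R \<Longrightarrow> 2 * (b \<bullet> a) / (a \<bullet> a) \<in> \<int>"
  using rs' by (elim conjE) (simp only: Ball_def)

lemma A_iff: "psi \<in> A \<longleftrightarrow> fst psi \<in> R" by (cases psi) (auto simp: A_def affine_roots_def)

lemma grad_nz: "psi \<in> A \<Longrightarrow> fst psi \<noteq> 0" using zeroR A_iff by metis

lemma hyp_eq: "hyp psi = {x. fst psi \<bullet> x = - real_of_int (snd psi)}"
  by (auto simp: hyp_def aff_eval_def)

lemma aff_eq: "aff_eval psi x = fst psi \<bullet> x + real_of_int (snd psi)"
  by (simp add: aff_eval_def)

lemma hyp_iff: "x \<in> hyp psi \<longleftrightarrow> aff_eval psi x = 0"
  by (simp add: hyp_def)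

lemma HU_iff: "x \<in> HU \<longleftrightarrow> (\<exists>psi\<in>A. aff_eval psi x = 0)"
  by (auto simp: HU_def hyp_iff)

lemma HU_eq: "HU = (\<Union>a\<in>R. {x. a \<bullet> x \<in> \<int>})"
proof (rule set_eqI, rule iffI)
  fix x assume "x \<in> HU"
  then obtain a n where "(a,n) \<in> A" "x \<in> hyp (a,n)" unfolding HU_def by auto
  then have "a \<in> R" "a \<bullet> x = - of_int n" by (auto simp: A_iff hyp_eq)
  moreover have "- (of_int n :: real) \<in> \<int>" by (metis Ints_minus Ints_of_int)
  ultimately show "x \<in> (\<Union>a\<in>R. {x. a \<bullet> x \<in> \<int>})" by (intro UN_I[of a]) auto
next
  fix x assume "x \<in> (\<Union>a\<in>R. {x. a \<bullet> x \<in> \<int>})"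
  then obtain a where a: "a \<in> R" "a \<bullet> x \<in> \<int>" by auto
  then obtain n where n: "a \<bullet> x = of_int n" by (auto elim: Ints_cases)
  have "(a, -n) \<in> A" using a by (simp add: A_iff)
  moreover have "x \<in> hyp (a,-n)" using n by (simp add: hyp_eq)
  ultimately show "x \<in> HU" unfolding HU_def by blast
qed

lemma closed_HU: "closed HU"
proof -
  have "closed {x. a \<bullet> x \<in> \<int>}" for a :: 'a
  proof -
    have "closed ((\<lambda>x. a \<bullet> x) -` \<int>)"
      by (rule continuous_closed_vimage) (auto intro: continuous_intros)
    moreover have "{x. a \<bullet> x \<in> \<int>} = (\<lambda>x. a \<bullet> x) -` \<int>" by auto
    ultimately show ?thesis by simp
  qed
  then show ?thesis unfolding HU_eq using finR by (intro closed_UN) auto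
qed

lemma open_comp: "open (UNIV - HU)" using closed_HU by (simp add: open_Diff)

lemma chamber_iff: "chamber R D \<longleftrightarrow> D \<in> components (UNIV - HU)"
  by (simp add: chamber_def HU_def A_def)

lemma no_sign_change:
  assumes "connected S" "x \<in> S" "y \<in> S" "aff_eval psi x \<le> 0" "0 \<le> aff_eval psi y"
  shows "\<exists>z\<in>S. aff_eval psi z = 0"
proof -
  have "x \<bullet> fst psi \<le> - of_int (snd psi)" "- of_int (snd psi) \<le> y \<bullet> fst psi"
    using assms(4,5) by (auto simp: aff_eq inner_commute)
  then obtain z where "z \<in> S" "z \<bullet> fst psi = - of_int (snd psi)"
    using connected_ivt_component[OF assms(1-3)] by blast
  moreover then have "aff_eval psi z = 0" by (simp add: aff_eq inner_commute)
  ultimately show ?thesis by blast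
qed

lemma const_sign:
  assumes "connected S" "x \<in> S" "y \<in> S" "\<forall>z\<in>S. aff_eval psi z \<noteq> 0"
  shows "sgn (aff_eval psi x) = sgn (aff_eval psi y)"
proof -
  have "\<not> (aff_eval psi x < 0 \<and> 0 < aff_eval psi y)"
    using no_sign_change[OF assms(1-3), of psi] assms(4) by force
  moreover have "\<not> (aff_eval psi y < 0 \<and> 0 < aff_eval psi x)"
    using no_sign_change[OF assms(1,3,2), of psi] assms(4) by force
  moreover have "aff_eval psi x \<noteq> 0" "aff_eval psi y \<noteq> 0" using assms by auto
  ultimately show ?thesis by (auto simp: sgn_if)
qed

lemma aff_comb: "u + v = 1 \<Longrightarrow> aff_eval psi (u *\<^sub>R x + v *\<^sub>R y) = u * aff_eval psi x + v * aff_eval psi y"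
proof -
  assume "u + v = 1"
  then have "real_of_int (snd psi) = u * real_of_int (snd psi) + v * real_of_int (snd psi)"
    by (metis distrib_right mult_1)
  then show ?thesis by (simp add: aff_eq inner_add_right algebra_simps)
qed

lemma convex_E: "convex (E p)"
proof (rule convexI)
  fix x y and u v :: real assume xy: "x \<in> E p" "y \<in> E p" and uv: "0 \<le> u" "0 \<le> v" "u + v = 1"
  show "u *\<^sub>R x + v *\<^sub>R y \<in> E p" unfolding E_def
  proof (clarify)
    fix psi assume psi: "psi \<in> A"
    have sx: "sgn (aff_eval psi x) = sgn (aff_eval psi p)" and sy: "sgn (aff_eval psi y) = sgn (aff_eval psi p)"
      using xy psi by (auto simp: E_def)
    have eq: "aff_eval psi (u *\<^sub>R x + v *\<^sub>R y) = u * aff_eval psi x + v * aff_eval psi y"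
      using aff_comb uv by blast
    consider "aff_eval psi p > 0" | "aff_eval psi p = 0" | "aff_eval psi p < 0" by linarith
    then show "sgn (aff_eval psi (u *\<^sub>R x + v *\<^sub>R y)) = sgn (aff_eval psi p)"
    proof cases
      case 1
      then have "aff_eval psi x > 0" "aff_eval psi y > 0" using sx sy by (auto simp: sgn_if split: if_splits)
      define m where "m = min (aff_eval psi x) (aff_eval psi y)"
      have m: "m > 0" "m \<le> aff_eval psi x" "m \<le> aff_eval psi y" using \<open>aff_eval psi x > 0\<close> \<open>aff_eval psi y > 0\<close> by (auto simp: m_def)
      have "u * m \<le> u * aff_eval psi x" "v * m \<le> v * aff_eval psi y" using m uv by (auto intro: mult_left_mono)
      moreover have "u * m + v * m = m" using uv by (metis distrib_right mult_1 mult.commute)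
      ultimately have "u * aff_eval psi x + v * aff_eval psi y > 0" using m by linarith
      then show ?thesis using 1 eq by simp
    next
      case 2
      then have "aff_eval psi x = 0" "aff_eval psi y = 0" using sx sy by (auto simp: sgn_if split: if_splits)
      then show ?thesis using 2 eq by simp
    next
      case 3
      then have "aff_eval psi x < 0" "aff_eval psi y < 0" using sx sy by (auto simp: sgn_if split: if_splits)
      define m where "m = max (aff_eval psi x) (aff_eval psi y)"
      have m: "m < 0" "aff_eval psi x \<le> m" "aff_eval psi y \<le> m" using \<open>aff_eval psi x < 0\<close> \<open>aff_eval psi y < 0\<close> by (auto simp: m_def)
      have "u * aff_eval psi x \<le> u * m" "v * aff_eval psi y \<le> v * m" using m uv by (auto intro: mult_left_mono)
      moreover have "u * m + v * m = m" using uv by (metis distrib_right mult_1 mult.commute)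
      ultimately have "u * aff_eval psi x + v * aff_eval psi y < 0" using m by linarith
      then show ?thesis using 3 eq by simp
    qed
  qed
qed

lemma p_in_E: "p \<in> E p" by (simp add: E_def)

lemma E_sub: assumes "p \<notin> HU" shows "E p \<subseteq> UNIV - HU"
proof
  fix x assume x: "x \<in> E p"
  have "x \<notin> HU"
  proof
    assume "x \<in> HU"
    then obtain psi where psi: "psi \<in> A" "aff_eval psi x = 0" by (auto simp: HU_iff)
    then have "sgn (aff_eval psi p) = 0" using x by (auto simp: E_def)
    then have "aff_eval psi p = 0" by (simp add: sgn_0_0)
    then show False using assms psi by (auto simp: HU_iff)
  qed
  then show "x \<in> UNIV - HU" by simp
qed

lemma conn_sub_E:
  assumes "connected S" "S \<subseteq> UNIV - HU" "p \<in> S"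
  shows "S \<subseteq> E p"
proof
  fix x assume x: "x \<in> S"
  show "x \<in> E p" unfolding E_def
  proof clarify
    fix psi assume "psi \<in> A"
    then have "\<forall>z\<in>S. aff_eval psi z \<noteq> 0" using assms(2) by (auto simp: HU_iff)
    then show "sgn (aff_eval psi x) = sgn (aff_eval psi p)" using const_sign assms x by blast
  qed
qed

lemma E_chamber:
  assumes "p \<notin> HU" shows "chamber R (E p)" "E p = connected_component_set (UNIV - HU) p"
proof -
  have c: "connected_component_set (UNIV - HU) p \<subseteq> E p"
    by (rule conn_sub_E) (auto simp: connected_connected_component assms connected_component_subset)
  have "E p \<subseteq> connected_component_set (UNIV - HU) p"
    by (rule connected_component_maximal) (auto simp: p_in_E convex_connected convex_E E_sub assms)
  then show eq: "E p = connected_component_set (UNIV - HU) p" using c by blast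
  show "chamber R (E p)" unfolding chamber_iff components_iff using eq assms by blast
qed

lemma chamber_E:
  assumes "chamber R D" "p \<in> D" shows "D = E p" "p \<notin> HU"
proof -
  obtain x where x: "x \<in> UNIV - HU" "D = connected_component_set (UNIV - HU) x"
    using assms(1) unfolding chamber_iff components_iff by blast
  have "p \<in> UNIV - HU" using assms(2) x connected_component_subset by blast
  then show "p \<notin> HU" by simp
  have "D = connected_component_set (UNIV - HU) p"
    using x assms(2) by (metis connected_component_eq mem_Collect_eq)
  then show "D = E p" using E_chamber \<open>p \<notin> HU\<close> by simp
qed

lemma chamber_ne: "chamber R D \<Longrightarrow> D \<noteq> {}"
  unfolding chamber_iff using in_components_nonempty by blast

lemma chamber_open: "chamber R D \<Longrightarrow> open D"
  unfolding chamber_iff components_iff using open_connected_component open_comp by blast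

lemma chamber_conn: "chamber R D \<Longrightarrow> connected D"
  unfolding chamber_iff using in_components_connected by blast

lemma chamber_sub: "chamber R D \<Longrightarrow> D \<subseteq> UNIV - HU"
  unfolding chamber_iff using in_components_subset by blast

lemma chamber_eqI: "chamber R D \<Longrightarrow> chamber R D' \<Longrightarrow> x \<in> D \<Longrightarrow> x \<in> D' \<Longrightarrow> D = D'"
  using chamber_E by metis


lemma HU_trans: assumes "\<forall>a\<in>R. a \<bullet> v \<in> \<int>" shows "v + x \<in> HU \<longleftrightarrow> x \<in> HU"
proof -
  have "a \<bullet> (v + x) \<in> \<int> \<longleftrightarrow> a \<bullet> x \<in> \<int>" if "a \<in> R" for a
  proof -
    have av: "a \<bullet> v \<in> \<int>" using assms that by blast
    have eq: "a \<bullet> (v + x) = a \<bullet> v + a \<bullet> x" by (simp add: inner_add_right)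
    show ?thesis
    proof
      assume "a \<bullet> (v + x) \<in> \<int>"
      then have "a \<bullet> (v + x) - a \<bullet> v \<in> \<int>" using av by (rule Ints_diff)
      then show "a \<bullet> x \<in> \<int>" using eq by simp
    next
      assume "a \<bullet> x \<in> \<int>" then show "a \<bullet> (v + x) \<in> \<int>" using av eq by (simp add: Ints_add)
    qed
  qed
  then show ?thesis unfolding HU_eq by blast
qed

lemma lat_neg: "\<forall>a\<in>R. a \<bullet> v \<in> \<int> \<Longrightarrow> \<forall>a\<in>R. a \<bullet> (- v) \<in> \<int>"
  by (simp add: Ints_minus)

lemma connected_trans: fixes S :: "'a set" assumes "connected S" shows "connected ((+) v ` S)"
proof -
  have "continuous_on S (\<lambda>x. v + x)" using continuous_on_add[OF continuous_on_const continuous_on_id] by blast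
  then show ?thesis using connected_continuous_image assms by blast
qed

lemma chamber_trans:
  assumes lat: "\<forall>a\<in>R. a \<bullet> v \<in> \<int>" and D: "chamber R D"
  shows "chamber R ((+) v ` D)"
proof -
  obtain p where p: "p \<in> D" using chamber_ne D by blast
  have Dp: "D = E p" and pH: "p \<notin> HU" using chamber_E[OF D p] by auto
  have q: "v + p \<notin> HU" using HU_trans[OF lat] pH by simp
  have sub1: "(+) v ` D \<subseteq> E (v + p)"
  proof (rule conn_sub_E)
    show "connected ((+) v ` D)" using chamber_conn[OF D] by (rule connected_trans)
    show "(+) v ` D \<subseteq> UNIV - HU" using chamber_sub[OF D] HU_trans[OF lat] by auto
    show "v + p \<in> (+) v ` D" using p by blast
  qed
  have sub2: "(+) (- v) ` E (v + p) \<subseteq> E p"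
  proof (rule conn_sub_E)
    show "connected ((+) (- v) ` E (v + p))" using convex_E convex_connected connected_trans by blast
    show "(+) (- v) ` E (v + p) \<subseteq> UNIV - HU"
      using E_sub[OF q] HU_trans[OF lat_neg[OF lat]] by auto
    show "p \<in> (+) (- v) ` E (v + p)" using p_in_E[of "v + p"] by (auto intro!: image_eqI[of _ _ "v + p"])
  qed
  have "(+) v ` D = E (v + p)"
  proof
    show "E (v + p) \<subseteq> (+) v ` D"
    proof
      fix y assume "y \<in> E (v + p)"
      then have "- v + y \<in> D" using sub2 Dp by blast
      then show "y \<in> (+) v ` D" by (auto intro!: image_eqI[of _ _ "- v + y"])
    qed
  qed (rule sub1)
  then show ?thesis using E_chamber[OF q] by simp
qed

lemma E_coord:
  assumes pH: "p \<notin> HU" and x: "x \<in> E p" and a: "a \<in> R"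
  shows "\<bar>a \<bullet> x - a \<bullet> p\<bar> < 1"
proof -
  define f where "f = \<lfloor>a \<bullet> p\<rfloor>"
  have fc: "of_int f \<le> a \<bullet> p" "a \<bullet> p < of_int f + 1" using floor_correct[of "a \<bullet> p"] by (auto simp: f_def)
  have A1: "(a, -f) \<in> A" and A2: "(a, -f - 1) \<in> A" using a by (auto simp: A_iff)
  have e1: "aff_eval (a, -f) y = a \<bullet> y - of_int f" for y by (simp add: aff_eq)
  have e2: "aff_eval (a, -f - 1) y = a \<bullet> y - of_int f - 1" for y by (simp add: aff_eq)
  have "aff_eval (a, -f) p \<noteq> 0" using pH A1 by (auto simp: HU_iff)
  then have p1: "aff_eval (a, -f) p > 0" using fc e1[of p] by linarith
  have p2: "aff_eval (a, -f - 1) p < 0" using fc e2[of p] by linarith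
  have "sgn (aff_eval (a, -f) x) = sgn (aff_eval (a, -f) p)" "sgn (aff_eval (a, -f - 1) x) = sgn (aff_eval (a, -f - 1) p)"
    using x A1 A2 unfolding E_def by blast+
  then have "aff_eval (a, -f) x > 0" "aff_eval (a, -f - 1) x < 0" using p1 p2 by (auto simp: sgn_if split: if_splits)
  then have "of_int f < a \<bullet> x" "a \<bullet> x < of_int f + 1" using e1[of x] e2[of x] by linarith+
  then show ?thesis using fc by linarith
qed

lemma coord_bound: "\<exists>K. \<forall>y. (\<forall>a\<in>R. \<bar>a \<bullet> y\<bar> \<le> 1) \<longrightarrow> norm y \<le> K"
proof -
  have "\<forall>e\<in>Basis. \<exists>u. e = (\<Sum>a\<in>R. u a *\<^sub>R a)"
  proof
    fix e :: 'a assume "e \<in> Basis"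
    have "e \<in> span R" using spanR by simp
    then show "\<exists>u. e = (\<Sum>a\<in>R. u a *\<^sub>R a)" using span_finite[OF finR] by auto
  qed
  then obtain U where U: "\<forall>e\<in>Basis. e = (\<Sum>a\<in>R. U e a *\<^sub>R a)" by (rule bchoice[THEN exE]) blast
  define K where "K = (\<Sum>e\<in>(Basis::'a set). \<Sum>a\<in>R. \<bar>U e a\<bar>)"
  have "norm y \<le> K" if y: "\<forall>a\<in>R. \<bar>a \<bullet> y\<bar> \<le> 1" for y
  proof -
    have "\<bar>y \<bullet> e\<bar> \<le> (\<Sum>a\<in>R. \<bar>U e a\<bar>)" if e: "e \<in> Basis" for e
    proof -
      have "y \<bullet> e = (\<Sum>a\<in>R. U e a * (a \<bullet> y))"
        using U e by (metis (no_types, lifting) inner_scaleR_right inner_sum_right inner_commute sum.cong)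
      also have "\<bar>\<dots>\<bar> \<le> (\<Sum>a\<in>R. \<bar>U e a * (a \<bullet> y)\<bar>)" by (rule sum_abs)
      also have "\<dots> \<le> (\<Sum>a\<in>R. \<bar>U e a\<bar>)"
      proof (rule sum_mono)
        fix a assume "a \<in> R"
        then have "\<bar>a \<bullet> y\<bar> \<le> 1" using y by blast
        then show "\<bar>U e a * (a \<bullet> y)\<bar> \<le> \<bar>U e a\<bar>"
          by (simp add: abs_mult mult_left_le)
      qed
      finally show ?thesis .
    qed
    then have "(\<Sum>e\<in>Basis. \<bar>y \<bullet> e\<bar>) \<le> K" unfolding K_def by (rule sum_mono)
    then show ?thesis using norm_le_l1[of y] by linarith
  qed
  then show ?thesis by blast
qed

lemma chamber_bounded: assumes "chamber R D" shows "bounded D"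
proof -
  obtain p where p: "p \<in> D" using chamber_ne assms by blast
  have Dp: "D = E p" and pH: "p \<notin> HU" using chamber_E[OF assms p] by auto
  obtain K where K: "\<And>y. (\<forall>a\<in>R. \<bar>a \<bullet> y\<bar> \<le> 1) \<Longrightarrow> norm y \<le> K" using coord_bound by blast
  have "dist p x \<le> K" if "x \<in> D" for x
  proof -
    have "\<forall>a\<in>R. \<bar>a \<bullet> (x - p)\<bar> \<le> 1"
      using E_coord[OF pH] that Dp by (auto simp: inner_diff_right less_imp_le)
    then have "norm (x - p) \<le> K" by (rule K)
    then show ?thesis by (simp add: dist_norm norm_minus_commute)
  qed
  then show ?thesis unfolding bounded_any_center[of _ p] by blast
qed

lemma fin_hyp: assumes "bounded B" shows "finite {psi\<in>A. hyp psi \<inter> B \<noteq> {}}"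
proof -
  obtain M where M: "\<forall>x\<in>B. norm x \<le> M" using assms bounded_iff by blast
  define NA where "NA = (\<Sum>a\<in>R. norm a)"
  define N where "N = \<lceil>NA * \<bar>M\<bar>\<rceil>"
  have "{psi\<in>A. hyp psi \<inter> B \<noteq> {}} \<subseteq> R \<times> {-N..N}"
  proof clarify
    fix a n assume an: "(a, n) \<in> A" "hyp (a, n) \<inter> B \<noteq> {}"
    then obtain x where x: "x \<in> B" "a \<bullet> x = - of_int n" by (auto simp: hyp_eq)
    have aR: "a \<in> R" using an by (simp add: A_iff)
    have "0 \<le> NA" unfolding NA_def by (simp add: sum_nonneg)
    have "norm a \<le> NA" unfolding NA_def using aR finR by (intro member_le_sum) auto
    have "\<bar>of_int n\<bar> = \<bar>a \<bullet> x\<bar>" using x by simp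
    also have "\<dots> \<le> norm a * norm x" by (rule Cauchy_Schwarz_ineq2)
    also have "\<dots> \<le> NA * \<bar>M\<bar>"
      using \<open>norm a \<le> NA\<close> \<open>0 \<le> NA\<close> M x by (intro mult_mono) auto
    finally have "\<bar>real_of_int n\<bar> \<le> NA * \<bar>M\<bar>" .
    then have "n \<le> N" "- n \<le> N" unfolding N_def le_ceiling_iff by auto
    then show "a \<in> R \<and> n \<in> {-N..N}" using aR by auto
  qed
  moreover have "finite (R \<times> {-N..N})" using finR by auto
  ultimately show ?thesis by (rule finite_subset)
qed

lemma fin_chambers: "finite {D. chamber R D \<and> D \<inter> ball c M \<noteq> {}}"
proof -
  define CH where "CH = {D. chamber R D \<and> D \<inter> ball c M \<noteq> {}}"
  define Phi where "Phi = {psi\<in>A. hyp psi \<inter> ball c M \<noteq> {}}"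
  have fPhi: "finite Phi" unfolding Phi_def by (rule fin_hyp) simp
  define pt where "pt D = (SOME x. x \<in> D \<inter> ball c M)" for D
  have pt: "pt D \<in> D \<inter> ball c M" if "D \<in> CH" for D
    unfolding pt_def by (rule someI_ex) (use that in \<open>auto simp: CH_def\<close>)
  define sig where "sig D = restrict (\<lambda>psi. sgn (aff_eval psi (pt D))) Phi" for D
  have "inj_on sig CH"
  proof (rule inj_onI)
    fix D D' assume D: "D \<in> CH" and D': "D' \<in> CH" and eq: "sig D = sig D'"
    have chD: "chamber R D" and chD': "chamber R D'" using D D' by (auto simp: CH_def)
    let ?p = "pt D" and ?q = "pt D'"
    have p: "?p \<in> D" "?p \<in> ball c M" and q: "?q \<in> D'" "?q \<in> ball c M" using pt D D' by auto
    have "?q \<in> E ?p" unfolding E_def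
    proof clarify
      fix psi assume psi: "psi \<in> A"
      show "sgn (aff_eval psi ?q) = sgn (aff_eval psi ?p)"
      proof (cases "psi \<in> Phi")
        case True
        then show ?thesis using fun_cong[OF eq, of psi] by (simp add: sig_def)
      next
        case False
        then have "\<forall>z\<in>ball c M. aff_eval psi z \<noteq> 0" using psi by (auto simp: Phi_def hyp_iff)
        then show ?thesis using const_sign[of "ball c M" ?q ?p psi] p q by auto
      qed
    qed
    then have "?q \<in> D" using chamber_E(1)[OF chD p(1)] by simp
    then show "D = D'" using chamber_eqI[OF chD chD' _ q(1)] by blast
  qed
  moreover have "sig ` CH \<subseteq> Phi \<rightarrow>\<^sub>E {-1, 0, 1}"
  proof
    fix g assume "g \<in> sig ` CH"
    then obtain D where "g = sig D" by blast
    have sg: "sgn t \<in> {-1, 0, 1::real}" for t by (auto simp: sgn_if)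
    show "g \<in> Phi \<rightarrow>\<^sub>E {-1, 0, 1}" unfolding \<open>g = sig D\<close> sig_def restrict_PiE_iff using sg by blast
  qed
  moreover have "finite (Phi \<rightarrow>\<^sub>E {-1, 0, 1::real})" using fPhi by (intro finite_PiE) auto
  ultimately have "finite CH" by (rule inj_on_finite)
  then show ?thesis by (simp add: CH_def)
qed

lemma lat_decomp: "\<exists>M0\<ge>0. \<forall>x. \<exists>v. (\<forall>b\<in>R. b \<bullet> v \<in> \<int>) \<and> norm (x - v) \<le> M0"
proof -
  define co where "co a = (2 / (a \<bullet> a)) *\<^sub>R a" for a :: 'a
  define M0 where "M0 = (\<Sum>a\<in>R. norm (co a))"
  have "\<exists>v. (\<forall>b\<in>R. b \<bullet> v \<in> \<int>) \<and> norm (x - v) \<le> M0" for x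
  proof -
    have "x \<in> span R" using spanR by simp
    then obtain u where u: "x = (\<Sum>a\<in>R. u a *\<^sub>R a)" using span_finite[OF finR] by auto
    define c where "c a = u a * (a \<bullet> a) / 2" for a
    have aa: "a \<bullet> a \<noteq> 0" if "a \<in> R" for a using that zeroR by auto
    have x2: "x = (\<Sum>a\<in>R. c a *\<^sub>R co a)"
      unfolding u
    proof (rule sum.cong[OF refl])
      fix a assume "a \<in> R"
      then show "u a *\<^sub>R a = c a *\<^sub>R co a" using aa[of a] by (simp add: c_def co_def)
    qed
    define v where "v = (\<Sum>a\<in>R. of_int \<lfloor>c a\<rfloor> *\<^sub>R co a)"
    have "b \<bullet> v \<in> \<int>" if b: "b \<in> R" for b
    proof -
      have "b \<bullet> v = (\<Sum>a\<in>R. of_int \<lfloor>c a\<rfloor> * (b \<bullet> co a))"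
        unfolding v_def by (simp add: inner_sum_right)
      also have "\<dots> \<in> \<int>"
      proof (rule Ints_sum)
        fix a assume a: "a \<in> R"
        have "b \<bullet> co a = 2 * (b \<bullet> a) / (a \<bullet> a)" by (simp add: co_def)
        then have "b \<bullet> co a \<in> \<int>" using intR[OF a b] by simp
        then show "of_int \<lfloor>c a\<rfloor> * (b \<bullet> co a) \<in> \<int>" by (intro Ints_mult) auto
      qed
      finally show ?thesis .
    qed
    moreover have "norm (x - v) \<le> M0"
    proof -
      have "x - v = (\<Sum>a\<in>R. frac (c a) *\<^sub>R co a)"
        unfolding x2 v_def frac_def by (simp add: sum_subtractf[symmetric] scaleR_diff_left)
      also have "norm \<dots> \<le> (\<Sum>a\<in>R. norm (frac (c a) *\<^sub>R co a))" by (rule norm_sum)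
      also have "\<dots> \<le> M0" unfolding M0_def
      proof (rule sum_mono)
        fix a
        have "\<bar>frac (c a)\<bar> \<le> 1" using frac_lt_1[of "c a"] frac_ge_0[of "c a"] by simp
        then show "norm (frac (c a) *\<^sub>R co a) \<le> norm (co a)"
          by (simp add: mult_left_le_one_le)
      qed
      finally show ?thesis .
    qed
    ultimately show ?thesis by blast
  qed
  moreover have "M0 \<ge> 0" unfolding M0_def by (simp add: sum_nonneg)
  ultimately show ?thesis by blast
qed

lemma uniform: "\<exists>\<delta> r. \<delta> > 0 \<and> r > 0 \<and> (\<forall>D. chamber R D \<longrightarrow>
    (\<exists>c. ball c r \<subseteq> D) \<and> (\<forall>x\<in>closure D. \<forall>y\<in>closure D. dist x y \<le> \<delta>))"
proof -
  obtain M0 where M0: "\<And>x. \<exists>v. (\<forall>b\<in>R. b \<bullet> v \<in> \<int>) \<and> norm (x - v) \<le> M0" using lat_decomp by blast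
  define F where "F = {D. chamber R D \<and> D \<inter> ball 0 (M0 + 1) \<noteq> {}}"
  have fF: "finite F" unfolding F_def by (rule fin_chambers)
  have "\<forall>D\<in>F. \<exists>cr. snd cr > 0 \<and> ball (fst cr) (snd cr) \<subseteq> D"
  proof
    fix D assume "D \<in> F"
    then have "chamber R D" by (simp add: F_def)
    then obtain p where "p \<in> D" using chamber_ne by blast
    then obtain e where "e > 0" "ball p e \<subseteq> D" using chamber_open[OF \<open>chamber R D\<close>] openE by blast
    then show "\<exists>cr. snd cr > 0 \<and> ball (fst cr) (snd cr) \<subseteq> D" by (intro exI[of _ "(p, e)"]) auto
  qed
  then obtain cr where cr: "\<forall>D\<in>F. snd (cr D) > 0 \<and> ball (fst (cr D)) (snd (cr D)) \<subseteq> D"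
    by (rule bchoice[THEN exE]) blast
  have "\<forall>D\<in>F. \<exists>d. d > 0 \<and> (\<forall>x\<in>closure D. \<forall>y\<in>closure D. dist x y \<le> d)"
  proof
    fix D assume "D \<in> F"
    then have "bounded (closure D)" using chamber_bounded by (auto simp: F_def)
    then obtain e where e: "\<forall>y\<in>closure D. dist 0 y \<le> e" using bounded_any_center by blast
    have "dist x y \<le> 2 * \<bar>e\<bar> + 1" if "x \<in> closure D" "y \<in> closure D" for x y
    proof -
      have "dist x y \<le> dist 0 x + dist 0 y" by (rule dist_triangle3)
      moreover have "dist 0 x \<le> e" "dist 0 y \<le> e" using e that by auto
      ultimately show ?thesis by linarith
    qed
    then show "\<exists>d. d > 0 \<and> (\<forall>x\<in>closure D. \<forall>y\<in>closure D. dist x y \<le> d)"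
      by (intro exI[of _ "2 * \<bar>e\<bar> + 1"]) auto
  qed
  then obtain df where df: "\<forall>D\<in>F. df D > 0 \<and> (\<forall>x\<in>closure D. \<forall>y\<in>closure D. dist x y \<le> df D)"
    by (rule bchoice[THEN exE]) blast
  define r where "r = Min (insert 1 ((\<lambda>D. snd (cr D)) ` F))"
  define \<delta> where "\<delta> = Max (insert 1 (df ` F))"
  have r: "r > 0" unfolding r_def using fF cr by auto
  have rle: "r \<le> snd (cr D)" if "D \<in> F" for D unfolding r_def using fF that by auto
  have d: "\<delta> > 0" unfolding \<delta>_def using fF by (simp add: Max_gr_iff)
  have dle: "df D \<le> \<delta>" if "D \<in> F" for D unfolding \<delta>_def using fF that by auto
  have "(\<exists>c. ball c r \<subseteq> D) \<and> (\<forall>x\<in>closure D. \<forall>y\<in>closure D. dist x y \<le> \<delta>)" if D: "chamber R D" for D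
  proof -
    obtain p where p: "p \<in> D" using chamber_ne D by blast
    obtain v where v: "\<forall>b\<in>R. b \<bullet> v \<in> \<int>" "norm (p - v) \<le> M0" using M0 by blast
    define D' where "D' = (+) (- v) ` D"
    have chD': "chamber R D'" unfolding D'_def using chamber_trans[OF lat_neg[OF v(1)] D] .
    have "- v + p \<in> D'" using p by (auto simp: D'_def)
    moreover have "- v + p \<in> ball 0 (M0 + 1)" using v(2) by (simp add: dist_norm norm_minus_commute)
    ultimately have D'F: "D' \<in> F" using chD' by (auto simp: F_def)
    have DD': "D = (+) v ` D'" unfolding D'_def by (auto simp: image_image intro!: image_eqI)
    have "ball (v + fst (cr D')) r \<subseteq> D"
    proof
      fix y assume "y \<in> ball (v + fst (cr D')) r"
      then have "- v + y \<in> ball (fst (cr D')) (snd (cr D'))"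
        using rle[OF D'F] by (auto simp: dist_norm algebra_simps)
      then have "- v + y \<in> D'" using cr D'F by blast
      then show "y \<in> D" unfolding D'_def by auto
    qed
    moreover have "dist x y \<le> \<delta>" if "x \<in> closure D" "y \<in> closure D" for x y
    proof -
      have cl: "closure D = (+) v ` closure D'" using DD' closure_translation by metis
      have "x \<in> (+) v ` closure D'" "y \<in> (+) v ` closure D'" using that cl by blast+
      then obtain x' y' where "x' \<in> closure D'" "y' \<in> closure D'" "x = v + x'" "y = v + y'"
        by blast
      then show ?thesis using df D'F dle[OF D'F] by force
    qed
    ultimately show ?thesis by blast
  qed
  then show ?thesis using r d by blast
qed

lemma far_chamber:
  assumes "infinite S" "\<forall>D\<in>S. chamber R D"
  shows "\<exists>D\<in>S. D \<inter> ball x0 M = {}"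
proof (rule ccontr)
  assume "\<not> ?thesis"
  then have "S \<subseteq> {D. chamber R D \<and> D \<inter> ball x0 M \<noteq> {}}" using assms(2) by blast
  then show False using fin_chambers assms(1) finite_subset by blast
qed


lemma aa_pos: "psi \<in> A \<Longrightarrow> fst psi \<bullet> fst psi > 0"
  using grad_nz by auto

lemma prop_hyp:
  assumes psi: "psi \<in> A" and phi: "phi \<in> A" and eq: "hyp phi = hyp psi"
  shows "\<exists>c. c \<noteq> 0 \<and> fst phi = c *\<^sub>R fst psi \<and> (\<forall>x. aff_eval phi x = c * aff_eval psi x)"
proof -
  define a where "a = fst psi"
  define b where "b = fst phi"
  have aa: "a \<bullet> a > 0" using aa_pos[OF psi] by (simp add: a_def)
  define c where "c = (b \<bullet> a) / (a \<bullet> a)"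
  have key: "aff_eval phi x = c * aff_eval psi x" for x
  proof -
    define y where "y = x - (aff_eval psi x / (a \<bullet> a)) *\<^sub>R a"
    have "aff_eval psi y = aff_eval psi x - (aff_eval psi x / (a \<bullet> a)) * (a \<bullet> a)"
      by (simp add: y_def aff_eq a_def inner_diff_right algebra_simps)
    also have "\<dots> = 0" using aa by simp
    finally have "y \<in> hyp psi" by (simp add: hyp_iff)
    then have "aff_eval phi y = 0" using eq by (simp add: hyp_iff[symmetric])
    moreover have "aff_eval phi y = aff_eval phi x - (aff_eval psi x / (a \<bullet> a)) * (b \<bullet> a)"
      by (simp add: y_def aff_eq b_def inner_diff_right algebra_simps)
    ultimately show ?thesis by (simp add: c_def field_simps)
  qed
  have grad: "b = c *\<^sub>R a"
  proof -
    have "b \<bullet> x = (c *\<^sub>R a) \<bullet> x" for x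
    proof -
      have "b \<bullet> x = aff_eval phi x - aff_eval phi 0" by (simp add: aff_eq b_def)
      also have "\<dots> = c * (aff_eval psi x - aff_eval psi 0)" using key by (simp add: algebra_simps)
      also have "\<dots> = (c *\<^sub>R a) \<bullet> x" by (simp add: aff_eq a_def)
      finally show ?thesis .
    qed
    then have "(b - c *\<^sub>R a) \<bullet> (b - c *\<^sub>R a) = 0" by (simp add: inner_diff_left)
    then show ?thesis by simp
  qed
  have "c \<noteq> 0" using grad grad_nz[OF phi] by (auto simp: b_def)
  then show ?thesis using grad key by (auto simp: a_def b_def)
qed

lemma refl_aff:
  assumes psi: "psi \<in> A" and phi: "phi \<in> A"
  shows "\<exists>phi'\<in>A. \<forall>x. aff_eval phi (aff_refl psi x) = aff_eval phi' x"
proof -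
  define a where "a = fst psi"
  define b where "b = fst phi"
  have aR: "a \<in> R" and bR: "b \<in> R" using psi phi by (auto simp: A_iff a_def b_def)
  have aa: "a \<bullet> a \<noteq> 0" using aa_pos[OF psi] by (simp add: a_def)
  define k where "k = 2 * (b \<bullet> a) / (a \<bullet> a)"
  have "k \<in> \<int>" using intR[OF aR bR] by (simp add: k_def)
  then obtain j where j: "k = of_int j" by (auto elim: Ints_cases)
  define phi' where "phi' = (b - k *\<^sub>R a, snd phi - j * snd psi)"
  have "phi' \<in> A" using reflR[OF aR bR] by (simp add: phi'_def A_iff k_def)
  moreover have "aff_eval phi (aff_refl psi x) = aff_eval phi' x" for x
  proof -
    have "aff_eval phi (aff_refl psi x) = b \<bullet> x - (2 * aff_eval psi x / (a \<bullet> a)) * (b \<bullet> a) + of_int (snd phi)"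
      by (simp add: aff_refl_def aff_eq b_def a_def inner_diff_right)
    also have "(2 * aff_eval psi x / (a \<bullet> a)) * (b \<bullet> a) = k * aff_eval psi x"
      using aa by (simp add: k_def field_simps)
    finally show ?thesis using j by (simp add: phi'_def aff_eq a_def inner_diff_left algebra_simps)
  qed
  ultimately show ?thesis by blast
qed

lemma refl_flip: "psi \<in> A \<Longrightarrow> aff_eval psi (aff_refl psi x) = - aff_eval psi x"
proof -
  assume psi: "psi \<in> A"
  have aa: "fst psi \<bullet> fst psi \<noteq> 0" using aa_pos[OF psi] by simp
  have "aff_eval psi (aff_refl psi x) = aff_eval psi x - (2 * aff_eval psi x / (fst psi \<bullet> fst psi)) * (fst psi \<bullet> fst psi)"
    by (simp add: aff_refl_def aff_eq inner_diff_right algebra_simps)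
  also have "\<dots> = - aff_eval psi x" using aa by simp
  finally show ?thesis .
qed

lemma refl_fix: "aff_eval psi z = 0 \<Longrightarrow> aff_refl psi z = z"
  by (simp add: aff_refl_def)

lemma refl_dist:
  assumes psi: "psi \<in> A" shows "dist (aff_refl psi x) (aff_refl psi y) = dist x y"
proof -
  define a where "a = fst psi"
  have aa: "a \<bullet> a \<noteq> 0" using aa_pos[OF psi] by (simp add: a_def)
  define d where "d = x - y"
  define t where "t = 2 * (a \<bullet> d) / (a \<bullet> a)"
  have diff: "aff_refl psi x - aff_refl psi y = d - t *\<^sub>R a"
  proof -
    have "aff_eval psi x - aff_eval psi y = a \<bullet> d" by (simp add: aff_eq a_def d_def inner_diff_right)
    then have "2 * aff_eval psi x / (a \<bullet> a) - 2 * aff_eval psi y / (a \<bullet> a) = t"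
      by (simp add: t_def diff_divide_distrib[symmetric] right_diff_distrib[symmetric])
    then show ?thesis
      by (simp add: aff_refl_def d_def a_def algebra_simps scaleR_diff_left[symmetric])
  qed
  have tt: "t * t * (a \<bullet> a) = 2 * t * (a \<bullet> d)" using aa by (simp add: t_def field_simps)
  have "(d - t *\<^sub>R a) \<bullet> (d - t *\<^sub>R a) = d \<bullet> d - 2 * t * (a \<bullet> d) + t * t * (a \<bullet> a)"
    by (simp add: inner_diff_left inner_diff_right inner_commute algebra_simps)
  also have "\<dots> = d \<bullet> d" using tt by simp
  finally have "norm (d - t *\<^sub>R a) = norm d" by (simp add: norm_eq_sqrt_inner)
  then show ?thesis by (simp add: dist_norm diff d_def)
qed

lemma refl_cont: assumes "psi \<in> A" shows "continuous_on S (aff_refl psi)"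
proof -
  have "fst psi \<bullet> fst psi \<noteq> 0" using aa_pos[OF assms] by simp
  then show ?thesis unfolding aff_refl_def aff_eval_def by (auto intro!: continuous_intros)
qed

lemma sgn_pos: "sgn u = sgn v \<Longrightarrow> v > 0 \<Longrightarrow> u > (0::real)" by (auto simp: sgn_if split: if_splits)
lemma sgn_neg: "sgn u = sgn v \<Longrightarrow> v < 0 \<Longrightarrow> u < (0::real)" by (auto simp: sgn_if split: if_splits)
lemma sgn_prod: "sgn u = sgn v \<Longrightarrow> (c * u < 0 \<longleftrightarrow> c * v < (0::real))"
  by (auto simp: sgn_if mult_less_0_iff split: if_splits)

lemma sep_iff:
  assumes "connected S" "connected T" "s \<in> S" "t \<in> T"
    "\<forall>z\<in>S. aff_eval phi z \<noteq> 0" "\<forall>z\<in>T. aff_eval phi z \<noteq> 0"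
  shows "separates phi S T \<longleftrightarrow> aff_eval phi s * aff_eval phi t < 0"
proof -
  have cS: "\<forall>x\<in>S. sgn (aff_eval phi x) = sgn (aff_eval phi s)" using const_sign assms by blast
  have cT: "\<forall>x\<in>T. sgn (aff_eval phi x) = sgn (aff_eval phi t)" using const_sign assms by blast
  show ?thesis
  proof
    assume "separates phi S T"
    then have "(aff_eval phi s > 0 \<and> aff_eval phi t < 0) \<or> (aff_eval phi s < 0 \<and> aff_eval phi t > 0)"
      using assms(3,4) unfolding separates_def by blast
    then show "aff_eval phi s * aff_eval phi t < 0" by (auto simp: mult_pos_neg mult_neg_pos)
  next
    assume "aff_eval phi s * aff_eval phi t < 0"
    then have "(aff_eval phi s > 0 \<and> aff_eval phi t < 0) \<or> (aff_eval phi s < 0 \<and> aff_eval phi t > 0)"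
      by (auto simp: mult_less_0_iff)
    then show "separates phi S T"
    proof
      assume h: "aff_eval phi s > 0 \<and> aff_eval phi t < 0"
      then show ?thesis unfolding separates_def using cS cT sgn_pos sgn_neg by meson
    next
      assume h: "aff_eval phi s < 0 \<and> aff_eval phi t > 0"
      then show ?thesis unfolding separates_def using cS cT sgn_pos sgn_neg by meson
    qed
  qed
qed

definition SEP where "SEP C0 D = {H. \<exists>psi\<in>A. H = hyp psi \<and> separates psi C0 D}"

lemma ht_SEP: "ht R C0 D = card (SEP C0 D)" by (simp add: ht_def SEP_def A_def)

lemma chamber_nz: "chamber R D \<Longrightarrow> phi \<in> A \<Longrightarrow> x \<in> D \<Longrightarrow> aff_eval phi x \<noteq> 0"
  using chamber_sub HU_iff by blast

lemma SEP_finite: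
  assumes C0: "chamber R C0" and D: "chamber R D"
  shows "finite (SEP C0 D)"
proof -
  obtain x0 where x0: "x0 \<in> C0" using chamber_ne C0 by blast
  obtain w where w: "w \<in> D" using chamber_ne D by blast
  have "SEP C0 D \<subseteq> hyp ` {phi\<in>A. hyp phi \<inter> closed_segment x0 w \<noteq> {}}"
  proof
    fix H assume "H \<in> SEP C0 D"
    then obtain phi where phi: "phi \<in> A" "H = hyp phi" "separates phi C0 D" by (auto simp: SEP_def)
    have "aff_eval phi x0 * aff_eval phi w < 0"
      using sep_iff[OF chamber_conn[OF C0] chamber_conn[OF D] x0 w] phi chamber_nz[OF C0] chamber_nz[OF D] by blast
    then have "(aff_eval phi x0 \<le> 0 \<and> 0 \<le> aff_eval phi w) \<or> (aff_eval phi w \<le> 0 \<and> 0 \<le> aff_eval phi x0)"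
      by (auto simp: mult_less_0_iff)
    then have "\<exists>q. q \<in> closed_segment x0 w \<and> aff_eval phi q = 0"
    proof
      assume "aff_eval phi x0 \<le> 0 \<and> 0 \<le> aff_eval phi w"
      then show "\<exists>q. q \<in> closed_segment x0 w \<and> aff_eval phi q = 0"
        using no_sign_change[OF connected_segment[of x0 w] ends_in_segment(1) ends_in_segment(2), of phi] by blast
    next
      assume "aff_eval phi w \<le> 0 \<and> 0 \<le> aff_eval phi x0"
      then show "\<exists>q. q \<in> closed_segment x0 w \<and> aff_eval phi q = 0"
        using no_sign_change[OF connected_segment[of x0 w] ends_in_segment(2) ends_in_segment(1), of phi] by blast
    qed
    then obtain q where "q \<in> closed_segment x0 w" "aff_eval phi q = 0" by blast
    then have "hyp phi \<inter> closed_segment x0 w \<noteq> {}" by (auto simp: hyp_iff)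
    then show "H \<in> hyp ` {phi\<in>A. hyp phi \<inter> closed_segment x0 w \<noteq> {}}" using phi by blast
  qed
  moreover have "finite (hyp ` {phi\<in>A. hyp phi \<inter> closed_segment x0 w \<noteq> {}})"
    by (intro finite_imageI fin_hyp bounded_closed_segment)
  ultimately show ?thesis by (rule finite_subset)
qed

lemma ht_step:
  assumes C0: "chamber R C0" and D: "chamber R D" and psi: "psi \<in> A"
    and z: "z \<in> hyp psi" "z \<in> closure D" and rho: "\<rho> > 0"
    and loc: "\<forall>phi\<in>A. hyp phi \<inter> ball z \<rho> \<noteq> {} \<longrightarrow> hyp phi = hyp psi"
    and nsep: "\<not> separates psi C0 D"
  shows "ht R C0 (aff_refl psi ` D) = ht R C0 D + 1"
proof -
  define D' where "D' = aff_refl psi ` D"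
  obtain x0 where x0: "x0 \<in> C0" using chamber_ne C0 by blast
  obtain w where w: "w \<in> D" "dist w z < \<rho>" using z(2) rho closure_approachable by blast
  define w' where "w' = aff_refl psi w"
  have w'D': "w' \<in> D'" using w by (simp add: w'_def D'_def)
  have "dist w' z = dist w z"
    using refl_dist[OF psi, of w z] refl_fix[of psi z] z(1) by (simp add: w'_def hyp_iff)
  then have wb: "w \<in> ball z \<rho>" "w' \<in> ball z \<rho>" using w by (auto simp: dist_commute)
  have cD': "connected D'" unfolding D'_def
    by (rule connected_continuous_image[OF refl_cont[OF psi] chamber_conn[OF D]])
  have nz0: "\<forall>x\<in>C0. aff_eval phi x \<noteq> 0" if "phi \<in> A" for phi using chamber_nz[OF C0 that] by blast
  have nzD: "\<forall>x\<in>D. aff_eval phi x \<noteq> 0" if "phi \<in> A" for phi using chamber_nz[OF D that] by blast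
  have nzD': "\<forall>x\<in>D'. aff_eval phi x \<noteq> 0" if phi: "phi \<in> A" for phi
  proof
    fix x assume "x \<in> D'"
    then obtain y where y: "y \<in> D" "x = aff_refl psi y" by (auto simp: D'_def)
    obtain phi' where "phi' \<in> A" "\<forall>x. aff_eval phi (aff_refl psi x) = aff_eval phi' x"
      using refl_aff[OF psi phi] by blast
    then show "aff_eval phi x \<noteq> 0" using y chamber_nz[OF D] by auto
  qed
  have sepD: "separates phi C0 D \<longleftrightarrow> aff_eval phi x0 * aff_eval phi w < 0" if "phi \<in> A" for phi
    using sep_iff[OF chamber_conn[OF C0] chamber_conn[OF D] x0 w(1)] nz0[OF that] nzD[OF that] by blast
  have sepD': "separates phi C0 D' \<longleftrightarrow> aff_eval phi x0 * aff_eval phi w' < 0" if "phi \<in> A" for phi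
    using sep_iff[OF chamber_conn[OF C0] cD' x0 w'D'] nz0[OF that] nzD'[OF that] by blast
  have caseA: "separates phi C0 D' \<longleftrightarrow> separates phi C0 D" if phi: "phi \<in> A" "hyp phi \<noteq> hyp psi" for phi
  proof -
    have "\<forall>x\<in>ball z \<rho>. aff_eval phi x \<noteq> 0"
    proof (intro ballI notI)
      fix x assume "x \<in> ball z \<rho>" "aff_eval phi x = 0"
      then have "hyp phi \<inter> ball z \<rho> \<noteq> {}" by (auto simp: hyp_iff)
      then show False using loc phi by blast
    qed
    then have "sgn (aff_eval phi w') = sgn (aff_eval phi w)"
      using const_sign[OF connected_ball wb(2) wb(1)] by blast
    then show ?thesis using sepD[OF phi(1)] sepD'[OF phi(1)] sgn_prod by blast
  qed
  have ww: "aff_eval psi w' = - aff_eval psi w" using refl_flip[OF psi] by (simp add: w'_def)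
  have nzx0: "aff_eval psi x0 \<noteq> 0" using nz0[OF psi] x0 by blast
  have nzw: "aff_eval psi w \<noteq> 0" using nzD[OF psi] w by blast
  have psi_nsep: "\<not> aff_eval psi x0 * aff_eval psi w < 0" using nsep sepD[OF psi] by blast
  have caseB: "separates phi C0 D' \<and> \<not> separates phi C0 D" if phi: "phi \<in> A" "hyp phi = hyp psi" for phi
  proof -
    obtain c where c: "c \<noteq> 0" "\<forall>x. aff_eval phi x = c * aff_eval psi x" using prop_hyp[OF psi phi] by blast
    have cc: "c * c > 0" using c(1) by (cases "c > 0") (auto simp: mult_pos_pos mult_neg_neg)
    have p1: "aff_eval phi x0 * aff_eval phi w = (c * c) * (aff_eval psi x0 * aff_eval psi w)"
      using c(2) by (simp add: algebra_simps)
    have p2: "aff_eval phi x0 * aff_eval phi w' = - ((c * c) * (aff_eval psi x0 * aff_eval psi w))"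
      using c(2) ww by (simp add: algebra_simps)
    have "aff_eval psi x0 * aff_eval psi w \<noteq> 0" using nzx0 nzw by simp
    then have pos: "aff_eval psi x0 * aff_eval psi w > 0" using psi_nsep by linarith
    have pp: "(c * c) * (aff_eval psi x0 * aff_eval psi w) > 0" using cc pos by (rule mult_pos_pos)
    have "\<not> separates phi C0 D" using sepD[OF phi(1)] p1 pp by linarith
    moreover have "separates phi C0 D'" using sepD'[OF phi(1)] p2 pp by linarith
    ultimately show ?thesis by blast
  qed
  have "SEP C0 D' = insert (hyp psi) (SEP C0 D)"
  proof
    show "SEP C0 D' \<subseteq> insert (hyp psi) (SEP C0 D)"
    proof
      fix H assume "H \<in> SEP C0 D'"
      then obtain phi where phi: "phi \<in> A" "H = hyp phi" "separates phi C0 D'" by (auto simp: SEP_def)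
      show "H \<in> insert (hyp psi) (SEP C0 D)"
      proof (cases "hyp phi = hyp psi")
        case True then show ?thesis using phi by simp
      next
        case False then show ?thesis using caseA[OF phi(1) False] phi by (auto simp: SEP_def)
      qed
    qed
    show "insert (hyp psi) (SEP C0 D) \<subseteq> SEP C0 D'"
    proof
      fix H assume "H \<in> insert (hyp psi) (SEP C0 D)"
      then consider "H = hyp psi" | "H \<in> SEP C0 D" by blast
      then show "H \<in> SEP C0 D'"
      proof cases
        case 1 then show ?thesis using caseB[OF psi refl] psi by (auto simp: SEP_def)
      next
        case 2
        then obtain phi where phi: "phi \<in> A" "H = hyp phi" "separates phi C0 D" by (auto simp: SEP_def)
        have "hyp phi \<noteq> hyp psi" using caseB phi by blast
        then show ?thesis using caseA[OF phi(1)] phi by (auto simp: SEP_def)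
      qed
    qed
  qed
  moreover have "hyp psi \<notin> SEP C0 D"
  proof
    assume "hyp psi \<in> SEP C0 D"
    then obtain phi where phi: "phi \<in> A" "hyp psi = hyp phi" "separates phi C0 D" by (auto simp: SEP_def)
    then show False using caseB[OF phi(1)] by simp
  qed
  ultimately show ?thesis
    using SEP_finite[OF C0 D] by (simp add: ht_SEP D'_def)
qed


lemma local_rho:
  assumes phi: "phi \<in> A" and uniq: "\<forall>psi\<in>A. z \<in> hyp psi \<longrightarrow> hyp psi = hyp phi"
  shows "\<exists>\<rho>>0. \<forall>psi\<in>A. hyp psi \<inter> ball z \<rho> \<noteq> {} \<longrightarrow> hyp psi = hyp phi"
proof -
  define Bad where "Bad = {psi\<in>A. hyp psi \<inter> ball z 1 \<noteq> {} \<and> z \<notin> hyp psi}"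
  have fB: "finite Bad" unfolding Bad_def
    by (rule finite_subset[OF _ fin_hyp[OF bounded_ball[of z 1]]]) blast
  define g where "g psi = \<bar>aff_eval psi z\<bar> / norm (fst psi)" for psi
  define \<rho> where "\<rho> = Min (insert 1 (g ` Bad))"
  have gpos: "g psi > 0" if "psi \<in> Bad" for psi
    using that grad_nz by (auto simp: Bad_def g_def hyp_iff)
  have rpos: "\<rho> > 0" unfolding \<rho>_def using fB gpos by auto
  have r1: "\<rho> \<le> 1" unfolding \<rho>_def using fB by auto
  have rg: "\<rho> \<le> g psi" if "psi \<in> Bad" for psi unfolding \<rho>_def using fB that by auto
  have "hyp psi = hyp phi" if psi: "psi \<in> A" and ne: "hyp psi \<inter> ball z \<rho> \<noteq> {}" for psi
  proof (cases "z \<in> hyp psi")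
    case True then show ?thesis using uniq psi by blast
  next
    case False
    obtain x where x: "x \<in> hyp psi" "dist z x < \<rho>" using ne by auto
    have "psi \<in> Bad" using psi False x r1 by (auto simp: Bad_def)
    have na: "norm (fst psi) > 0" using grad_nz[OF psi] by simp
    have "aff_eval psi z = aff_eval psi z - aff_eval psi x" using x(1) by (simp add: hyp_iff)
    also have "\<dots> = fst psi \<bullet> (z - x)" by (simp add: aff_eq inner_diff_right)
    finally have "\<bar>aff_eval psi z\<bar> \<le> norm (fst psi) * dist z x"
      using Cauchy_Schwarz_ineq2[of "fst psi" "z - x"] by (simp add: dist_norm)
    also have "\<dots> < norm (fst psi) * \<rho>" using x(2) na by simp
    also have "\<dots> \<le> norm (fst psi) * g psi" using rg[OF \<open>psi \<in> Bad\<close>] na by simp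
    also have "\<dots> = \<bar>aff_eval psi z\<bar>" using na by (simp add: g_def)
    finally show ?thesis by simp
  qed
  then show ?thesis using rpos by blast
qed

lemma facet:
  assumes D: "chamber R D" and psi: "psi \<in> A" and z: "z \<in> hyp psi" "z \<in> closure D"
    and rho: "\<rho> > 0" and loc: "\<forall>phi\<in>A. hyp phi \<inter> ball z \<rho> \<noteq> {} \<longrightarrow> hyp phi = hyp psi"
  shows "hyp psi \<inter> ball z \<rho> \<subseteq> closure D" "is_face_hyp R D psi"
proof -
  obtain w where w: "w \<in> D" "dist w z < \<rho>" using z(2) rho closure_approachable by blast
  define a where "a = fst psi"
  define \<sigma> where "\<sigma> = sgn (aff_eval psi w)"
  have nzw: "aff_eval psi w \<noteq> 0" using chamber_nz[OF D psi w(1)] .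
  have ss: "\<sigma> * \<sigma> = 1" using nzw by (auto simp: \<sigma>_def sgn_if)
  have sw: "\<sigma> * aff_eval psi w > 0" using nzw by (auto simp: \<sigma>_def sgn_if)
  define Hb where "Hb = ball z \<rho> \<inter> {x. \<sigma> * aff_eval psi x > 0}"
  define Hs where "Hs = {x. (\<sigma> *\<^sub>R a) \<bullet> x > - \<sigma> * of_int (snd psi)}"
  have cHs: "convex Hs" unfolding Hs_def by (rule convex_halfspace_gt)
  have eqH: "{x. \<sigma> * aff_eval psi x > 0} = Hs"
  proof -
    have "\<sigma> * aff_eval psi x > 0 \<longleftrightarrow> (\<sigma> *\<^sub>R a) \<bullet> x > - \<sigma> * of_int (snd psi)" for x
      unfolding aff_eq a_def inner_scaleR_left distrib_left by linarith
    then show ?thesis unfolding Hs_def by blast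
  qed
  have "Hb = ball z \<rho> \<inter> Hs" unfolding Hb_def eqH ..
  then have cHb: "convex Hb" using convex_Int[OF convex_ball cHs] by simp
  have wHb: "w \<in> Hb" using w sw by (simp add: Hb_def dist_commute)
  have "Hb \<subseteq> UNIV - HU"
  proof
    fix x assume x: "x \<in> Hb"
    have "x \<notin> HU"
    proof
      assume "x \<in> HU"
      then obtain phi where phi: "phi \<in> A" "aff_eval phi x = 0" by (auto simp: HU_iff)
      then have "hyp phi \<inter> ball z \<rho> \<noteq> {}" using x by (auto simp: Hb_def hyp_iff)
      then have "hyp phi = hyp psi" using loc phi by blast
      then have "aff_eval psi x = 0" using phi by (metis hyp_iff)
      then show False using x by (simp add: Hb_def)
    qed
    then show "x \<in> UNIV - HU" by simp
  qed
  then have "Hb \<subseteq> E w" using conn_sub_E cHb convex_connected wHb by blast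
  then have HbD: "Hb \<subseteq> D" using chamber_E(1)[OF D w(1)] by simp
  have na: "norm a > 0" using grad_nz[OF psi] by (simp add: a_def)
  show sub: "hyp psi \<inter> ball z \<rho> \<subseteq> closure D"
  proof
    fix q assume q: "q \<in> hyp psi \<inter> ball z \<rho>"
    have "q \<in> closure Hb" unfolding closure_approachable
    proof (intro allI impI)
      fix e :: real assume e: "e > 0"
      have dq: "dist z q < \<rho>" using q by simp
      define m where "m = min e (\<rho> - dist z q)"
      have mpos: "m > 0" using e dq by (simp add: m_def)
      have me: "m \<le> e" "m \<le> \<rho> - dist z q" by (auto simp: m_def)
      define t where "t = m / (2 * norm a)"
      have tpos: "t > 0" unfolding t_def using mpos na by (intro divide_pos_pos) auto
      define x where "x = q + (t * \<sigma>) *\<^sub>R a"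
      have asig: "\<bar>\<sigma>\<bar> = 1" using nzw unfolding \<sigma>_def by (auto simp: sgn_if)
      have dxq: "dist x q = t * norm a" using tpos asig by (simp add: x_def dist_norm abs_mult)
      have tn: "t * norm a = m / 2" using na unfolding t_def by (simp add: field_simps)
      have "dist z x \<le> dist z q + dist q x" by (rule dist_triangle)
      also have "\<dots> < \<rho>" using dxq tn me mpos by (simp add: dist_commute)
      finally have xb: "x \<in> ball z \<rho>" by simp
      have "aff_eval psi x = aff_eval psi q + t * \<sigma> * (a \<bullet> a)"
        by (simp add: x_def aff_eq a_def inner_add_right algebra_simps)
      then have "\<sigma> * aff_eval psi x = t * (\<sigma> * \<sigma>) * (a \<bullet> a)" using q by (simp add: hyp_iff algebra_simps)
      also have "\<dots> > 0" using ss tpos na by simp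
      finally have "x \<in> Hb" using xb by (simp add: Hb_def)
      moreover have "dist x q < e" using dxq tn me mpos by simp
      ultimately show "\<exists>x\<in>Hb. dist x q < e" by blast
    qed
    then show "q \<in> closure D" using closure_mono[OF HbD] by blast
  qed
  have hyp_h: "hyp psi = {x. a \<bullet> x = - of_int (snd psi)}" by (simp add: hyp_eq a_def)
  have ad: "aff_dim (hyp psi) = int DIM('a) - 1" unfolding hyp_h using grad_nz[OF psi] by (simp add: a_def)
  have "aff_dim (hyp psi \<inter> ball z \<rho>) = aff_dim (hyp psi)"
    using z(1) rho unfolding hyp_h by (intro aff_dim_convex_Int_open) (auto simp: convex_hyperplane)
  moreover have "aff_dim (hyp psi \<inter> ball z \<rho>) \<le> aff_dim (hyp psi \<inter> closure D)"
    using sub by (intro aff_dim_subset) blast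
  moreover have "aff_dim (hyp psi \<inter> closure D) \<le> aff_dim (hyp psi)" by (intro aff_dim_subset) blast
  ultimately have "aff_dim (hyp psi \<inter> closure D) = int DIM('a) - 1" using ad by linarith
  then show "is_face_hyp R D psi" using psi by (simp add: is_face_hyp_def A_def)
qed

lemma generic:
  assumes x0: "x0 \<notin> HU" and fP: "finite Phi" and PA: "Phi \<subseteq> A" and U: "open U" "U \<noteq> {}"
  shows "\<exists>y\<in>U. \<forall>phi\<in>Phi. \<forall>phi'\<in>Phi. \<forall>s. x0 + s *\<^sub>R (y - x0) \<in> hyp phi \<inter> hyp phi' \<longrightarrow> hyp phi = hyp phi'"
proof -
  define Bad where "Bad phi phi' = {y. \<exists>s. x0 + s *\<^sub>R (y - x0) \<in> hyp phi \<inter> hyp phi'}" for phi phi'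
  have neg: "negligible (Bad phi phi')" if phi: "phi \<in> A" "phi' \<in> A" and ne: "hyp phi \<noteq> hyp phi'" for phi phi'
  proof (cases "Bad phi phi' = {}")
    case True then show ?thesis by simp
  next
    case False
    then obtain y0 s0 where q: "x0 + s0 *\<^sub>R (y0 - x0) \<in> hyp phi \<inter> hyp phi'" by (auto simp: Bad_def)
    define q where "q = x0 + s0 *\<^sub>R (y0 - x0)"
    define a where "a = fst phi"
    define b where "b = fst phi'"
    define \<alpha> where "\<alpha> = - real_of_int (snd phi)"
    define \<beta> where "\<beta> = - real_of_int (snd phi')"
    have h1: "hyp phi = {x. a \<bullet> x = \<alpha>}" by (simp add: hyp_eq a_def \<alpha>_def)
    have h2: "hyp phi' = {x. b \<bullet> x = \<beta>}" by (simp add: hyp_eq b_def \<beta>_def)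
    have qa: "a \<bullet> q = \<alpha>" and qb: "b \<bullet> q = \<beta>" using q h1 h2 by (auto simp: q_def)
    have x0a: "a \<bullet> x0 \<noteq> \<alpha>" using x0 phi(1) h1 by (auto simp: HU_def)
    have bnz: "b \<noteq> 0" using grad_nz[OF phi(2)] by (simp add: b_def)
    define g where "g = (\<alpha> - a \<bullet> x0) *\<^sub>R b - (\<beta> - b \<bullet> x0) *\<^sub>R a"
    have gnz: "g \<noteq> 0"
    proof
      assume "g = 0"
      then have e: "(\<alpha> - a \<bullet> x0) *\<^sub>R b = (\<beta> - b \<bullet> x0) *\<^sub>R a" by (simp add: g_def)
      define l where "l = (\<beta> - b \<bullet> x0) / (\<alpha> - a \<bullet> x0)"
      have nz: "\<alpha> - a \<bullet> x0 \<noteq> 0" using x0a by simp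
      have bl: "b = l *\<^sub>R a"
      proof -
        have "b = (1 / (\<alpha> - a \<bullet> x0)) *\<^sub>R ((\<alpha> - a \<bullet> x0) *\<^sub>R b)" using nz by simp
        also have "\<dots> = l *\<^sub>R a" unfolding e by (simp add: l_def)
        finally show ?thesis .
      qed
      have lnz: "l \<noteq> 0" using bl bnz by auto
      have "\<beta> = l * \<alpha>" using qb qa bl by simp
      then have "hyp phi' = hyp phi" unfolding h1 h2 using lnz bl by auto
      then show False using ne by simp
    qed
    have "Bad phi phi' \<subseteq> {y. g \<bullet> y = g \<bullet> x0}"
    proof
      fix y assume "y \<in> Bad phi phi'"
      then obtain s where s: "x0 + s *\<^sub>R (y - x0) \<in> hyp phi \<inter> hyp phi'" by (auto simp: Bad_def)
      then have ea: "\<alpha> - a \<bullet> x0 = s * (a \<bullet> (y - x0))" and eb: "\<beta> - b \<bullet> x0 = s * (b \<bullet> (y - x0))"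
        using h1 h2 by (auto simp: inner_add_right)
      have "g \<bullet> (y - x0) = (\<alpha> - a \<bullet> x0) * (b \<bullet> (y - x0)) - (\<beta> - b \<bullet> x0) * (a \<bullet> (y - x0))"
        by (simp add: g_def inner_diff_left)
      also have "\<dots> = 0" unfolding ea eb by simp
      finally show "y \<in> {y. g \<bullet> y = g \<bullet> x0}" by (simp add: inner_diff_right)
    qed
    moreover have "negligible {y. g \<bullet> y = g \<bullet> x0}" using gnz by (intro negligible_hyperplane) simp
    ultimately show ?thesis using negligible_subset by blast
  qed
  define P where "P = {p \<in> Phi \<times> Phi. hyp (fst p) \<noteq> hyp (snd p)}"
  have "finite P" using fP unfolding P_def by auto
  then have "negligible (\<Union>((\<lambda>p. Bad (fst p) (snd p)) ` P))"
  proof (intro negligible_Union)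
    show "finite ((\<lambda>p. Bad (fst p) (snd p)) ` P)" using \<open>finite P\<close> by simp
    fix T assume "T \<in> (\<lambda>p. Bad (fst p) (snd p)) ` P"
    then obtain p where p: "p \<in> P" "T = Bad (fst p) (snd p)" by blast
    have h: "fst p \<in> A" "snd p \<in> A" "hyp (fst p) \<noteq> hyp (snd p)" using p(1) PA unfolding P_def by auto
    show "negligible T" unfolding p(2) by (rule neg[OF h(1) h(2) h(3)])
  qed
  then have "\<not> U \<subseteq> (\<Union>((\<lambda>p. Bad (fst p) (snd p)) ` P))"
    using open_not_negligible[OF U] negligible_subset by blast
  then obtain y where y: "y \<in> U" "y \<notin> (\<Union>((\<lambda>p. Bad (fst p) (snd p)) ` P))" by blast
  have "\<forall>phi\<in>Phi. \<forall>phi'\<in>Phi. \<forall>s. x0 + s *\<^sub>R (y - x0) \<in> hyp phi \<inter> hyp phi' \<longrightarrow> hyp phi = hyp phi'"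
  proof (intro ballI allI impI)
    fix phi phi' s assume "phi \<in> Phi" "phi' \<in> Phi" and h: "x0 + s *\<^sub>R (y - x0) \<in> hyp phi \<inter> hyp phi'"
    show "hyp phi = hyp phi'"
    proof (rule ccontr)
      assume "hyp phi \<noteq> hyp phi'"
      then have "(phi, phi') \<in> P" using \<open>phi \<in> Phi\<close> \<open>phi' \<in> Phi\<close> by (simp add: P_def)
      moreover have "y \<in> Bad phi phi'" using h by (auto simp: Bad_def)
      ultimately show False using y(2) by force
    qed
  qed
  then show ?thesis using y(1) by blast
qed

lemma exit_pt:
  assumes D: "chamber R D" and y: "y \<in> D" and x0: "x0 \<notin> D"
  shows "\<exists>s>1. x0 + s *\<^sub>R (y - x0) \<in> closure D \<and> x0 + s *\<^sub>R (y - x0) \<in> HU"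
proof -
  define d where "d = y - x0"
  have dnz: "d \<noteq> 0" using x0 y by (auto simp: d_def)
  have nd: "norm d > 0" using dnz by simp
  define T where "T = {t. 1 \<le> t \<and> x0 + t *\<^sub>R d \<notin> D}"
  obtain K where K: "\<forall>x\<in>D. norm x \<le> K" using chamber_bounded[OF D] bounded_iff by blast
  have K0: "K \<ge> 0" using K y norm_ge_zero order_trans by blast
  define t0 where "t0 = (K + norm x0 + 1) / norm d + 1"
  have "t0 \<in> T"
  proof -
    have t01: "1 \<le> t0" using K0 nd by (simp add: t0_def)
    have "t0 * norm d = K + norm x0 + 1 + norm d" using nd by (simp add: t0_def field_simps)
    moreover have "norm (t0 *\<^sub>R d) \<le> norm (x0 + t0 *\<^sub>R d) + norm x0"
      using norm_triangle_ineq4[of "x0 + t0 *\<^sub>R d" x0] by simp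
    moreover have "norm (t0 *\<^sub>R d) = t0 * norm d" using t01 by simp
    ultimately have "norm (x0 + t0 *\<^sub>R d) > K" using nd by linarith
    then show ?thesis using K t01 by (auto simp: T_def)
  qed
  then have Tne: "T \<noteq> {}" by blast
  have bdd: "bdd_below T" unfolding T_def by (rule bdd_belowI[of _ 1]) auto
  define s where "s = Inf T"
  have s1: "s \<ge> 1" unfolding s_def using Tne by (intro cInf_greatest) (auto simp: T_def)
  have inD: "x0 + t *\<^sub>R d \<in> D" if "1 \<le> t" "t < s" for t
  proof (rule ccontr)
    assume "x0 + t *\<^sub>R d \<notin> D"
    then have "t \<in> T" using that by (simp add: T_def)
    then have "s \<le> t" unfolding s_def using bdd by (rule cInf_lower)
    then show False using that by simp
  qed
  define z where "z = x0 + s *\<^sub>R d"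
  have dist_t: "dist (x0 + t *\<^sub>R d) z = \<bar>t - s\<bar> * norm d" for t
  proof -
    have "(x0 + t *\<^sub>R d) - z = (t - s) *\<^sub>R d" by (simp add: z_def algebra_simps)
    then show ?thesis by (simp add: dist_norm)
  qed
  have zD: "z \<notin> D"
  proof
    assume "z \<in> D"
    then obtain e where e: "e > 0" "ball z e \<subseteq> D" using chamber_open[OF D] openE by blast
    have "s + e / norm d \<le> t" if "t \<in> T" for t
    proof (rule ccontr)
      assume "\<not> ?thesis"
      then have lt: "t < s + e / norm d" by simp
      have t1: "1 \<le> t" and tD: "x0 + t *\<^sub>R d \<notin> D" using that by (auto simp: T_def)
      have "s \<le> t" using that bdd unfolding s_def by (rule cInf_lower)
      then have "\<bar>t - s\<bar> * norm d < e" using lt nd by (simp add: field_simps)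
      then have "x0 + t *\<^sub>R d \<in> ball z e" using dist_t by (simp add: dist_commute)
      then show False using e tD by blast
    qed
    then have "s + e / norm d \<le> s" unfolding s_def using Tne by (intro cInf_greatest) auto
    moreover have "e / norm d > 0" using e nd by simp
    ultimately show False by linarith
  qed
  have sgt: "s > 1"
  proof (rule ccontr)
    assume "\<not> s > 1"
    then have "s = 1" using s1 by simp
    then have "z = y" by (simp add: z_def d_def)
    then show False using zD y by simp
  qed
  have zcl: "z \<in> closure D" unfolding closure_approachable
  proof (intro allI impI)
    fix e :: real assume e: "e > 0"
    define mv where "mv = min (s - 1) (e / norm d)"
    define t where "t = s - mv / 2"
    have m: "mv > 0" using sgt e nd by (simp add: mv_def)
    have mm: "mv \<le> s - 1" "mv \<le> e / norm d" by (auto simp: mv_def)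
    have t1a: "1 \<le> t" using m mm unfolding t_def by linarith
    have t1b: "t < s" using m mm unfolding t_def by linarith
    note t1 = t1a t1b
    have "\<bar>t - s\<bar> * norm d = mv / 2 * norm d" using m by (simp add: t_def)
    also have "\<dots> \<le> (e / norm d) / 2 * norm d" using nd mm by (intro mult_right_mono divide_right_mono) auto
    also have "\<dots> < e" using nd e by simp
    finally have "dist (x0 + t *\<^sub>R d) z < e" using dist_t by simp
    then show "\<exists>x\<in>D. dist x z < e" using inD[OF t1] by blast
  qed
  have zH: "z \<in> HU"
  proof (rule ccontr)
    assume zn: "z \<notin> HU"
    have "open (E z)" using chamber_open E_chamber(1)[OF zn] by blast
    moreover have "z \<in> E z" by (rule p_in_E)
    ultimately have "E z \<inter> D \<noteq> {}" using zcl open_Int_closure_eq_empty by blast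
    then obtain x where "x \<in> E z" "x \<in> D" by blast
    then have "E z = D" using chamber_eqI[OF E_chamber(1)[OF zn] D] by blast
    then show False using zD p_in_E[of z] by simp
  qed
  show ?thesis using sgt zcl zH unfolding z_def d_def by blast
qed


end

theorem proposition2p6:
  fixes R :: "'a::euclidean_space set" and C0 :: "'a set" and X :: "('a \<times> int) list"
  assumes "reduced_irreducible_root_system R"
    and "chamber R C0"
    and "permissible R X"
  shows "finite {D. incident R X D \<and>
                  cfaces R C0 D = (\<lambda>psi. hyp psi \<inter> closure D) ` set X}"
proof (rule ccontr)
  note rsR = assms(1) and C0 = assms(2) and perm = assms(3)
  interpret rsys R using rsR by (rule rsys.intro)
  define S where "S = {D. incident R X D \<and> cfaces R C0 D = (\<lambda>psi. hyp psi \<inter> closure D) ` set X}"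
  assume "infinite {D. incident R X D \<and> cfaces R C0 D = (\<lambda>psi. hyp psi \<inter> closure D) ` set X}"
  then have inf: "infinite S" by (simp add: S_def)
  have SC: "\<forall>D\<in>S. chamber R D" by (simp add: S_def incident_def)
  have XA: "set X \<subseteq> A" using perm by (simp add: permissible_def A_def)
  obtain \<delta> r where dpos: "\<delta> > 0" and rpos: "r > 0" and unif: "\<And>D. chamber R D \<Longrightarrow>
      (\<exists>c. ball c r \<subseteq> D) \<and> (\<forall>x\<in>closure D. \<forall>y\<in>closure D. dist x y \<le> \<delta>)"
    using uniform by blast
  obtain x0 where x0: "x0 \<in> C0" using chamber_ne C0 by blast
  have x0H: "x0 \<notin> HU" using chamber_E(2)[OF C0 x0] .
  define K where "K = Max (insert 0 ((\<lambda>psi. \<bar>aff_eval psi x0\<bar> / norm (fst psi)) ` set X))"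
  have K: "\<bar>aff_eval psi x0\<bar> / norm (fst psi) \<le> K" if "psi \<in> set X" for psi
    unfolding K_def using that by (intro Max_ge) auto
  have K0: "K \<ge> 0" unfolding K_def by (intro Max_ge) auto
  define M where "M = 2 * \<delta> * (\<delta> + K) / r + 1"
  have Mpos: "M > 0" unfolding M_def using dpos rpos K0 by (simp add: add_pos_nonneg)
  obtain D where DS: "D \<in> S" and far: "D \<inter> ball x0 M = {}" using far_chamber[OF inf SC] by blast
  have D: "chamber R D" using DS SC by blast
  have faces: "\<forall>psi\<in>set X. is_face_hyp R D psi" using DS by (simp add: S_def incident_def)
  have cf: "cfaces R C0 D = (\<lambda>psi. hyp psi \<inter> closure D) ` set X" using DS by (simp add: S_def)
  obtain c where c: "ball c r \<subseteq> D" using unif[OF D] by blast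
  have diam: "\<forall>x\<in>closure D. \<forall>y\<in>closure D. dist x y \<le> \<delta>" using unif[OF D] by blast
  have cD: "c \<in> D" using c rpos by auto
  define B where "B = cball x0 (dist x0 c + \<delta>)"
  have clB: "closure D \<subseteq> B"
  proof
    fix x assume x: "x \<in> closure D"
    have "dist c x \<le> \<delta>" using diam x cD closure_subset by blast
    then have "dist x0 x \<le> dist x0 c + \<delta>" using dist_triangle[of x0 x c] by linarith
    then show "x \<in> B" by (simp add: B_def)
  qed
  define Phi where "Phi = {phi\<in>A. hyp phi \<inter> B \<noteq> {}}"
  have fPhi: "finite Phi" unfolding Phi_def B_def by (rule fin_hyp[OF bounded_cball])
  obtain y where yU: "y \<in> ball c (r / 2)"
    and gen: "\<forall>phi\<in>Phi. \<forall>phi'\<in>Phi. \<forall>s. x0 + s *\<^sub>R (y - x0) \<in> hyp phi \<inter> hyp phi' \<longrightarrow> hyp phi = hyp phi'"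
    using generic[OF x0H fPhi _ open_ball, of c "r / 2"] rpos by (auto simp: Phi_def)
  have yD: "y \<in> D" using yU c rpos by auto
  have x0D: "x0 \<notin> D" using far Mpos by auto
  obtain s where s1: "s > 1" and zcl: "x0 + s *\<^sub>R (y - x0) \<in> closure D" and zH: "x0 + s *\<^sub>R (y - x0) \<in> HU"
    using exit_pt[OF D yD x0D] by blast
  define z where "z = x0 + s *\<^sub>R (y - x0)"
  define d where "d = y - x0"
  obtain phi where phi: "phi \<in> A" "aff_eval phi z = 0" using zH by (auto simp: HU_iff z_def)
  have zphi: "z \<in> hyp phi" using phi by (simp add: hyp_iff)
  have zB: "z \<in> B" using zcl clB by (auto simp: z_def)
  have phiP: "phi \<in> Phi" using phi zphi zB by (auto simp: Phi_def)
  have uniq: "\<forall>psi\<in>A. z \<in> hyp psi \<longrightarrow> hyp psi = hyp phi"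
  proof (intro ballI impI)
    fix psi assume psi: "psi \<in> A" "z \<in> hyp psi"
    then have "psi \<in> Phi" using zB by (auto simp: Phi_def)
    then show "hyp psi = hyp phi" using gen phiP psi(2) zphi by (auto simp: z_def)
  qed
  obtain \<rho> where rho: "\<rho> > 0" and loc: "\<forall>psi\<in>A. hyp psi \<inter> ball z \<rho> \<noteq> {} \<longrightarrow> hyp psi = hyp phi"
    using local_rho[OF phi(1) uniq] by blast
  have zcl': "z \<in> closure D" using zcl by (simp add: z_def)
  have face: "is_face_hyp R D phi" using facet[OF D phi(1) zphi zcl' rho loc] by blast
  define b where "b = fst phi"
  define L where "L = b \<bullet> d"
  have aline: "aff_eval phi (x0 + t *\<^sub>R d) = aff_eval phi x0 + t * L" for t
    by (simp add: aff_eq L_def b_def inner_add_right algebra_simps)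
  have ax0: "aff_eval phi x0 = - s * L" using aline[of s] phi(2) by (simp add: z_def d_def)
  have ay: "aff_eval phi y = (1 - s) * L" using aline[of 1] ax0 by (simp add: d_def algebra_simps)
  have nsep: "\<not> separates phi C0 D"
  proof
    assume "separates phi C0 D"
    then have "aff_eval phi x0 * aff_eval phi y < 0"
      using sep_iff[OF chamber_conn[OF C0] chamber_conn[OF D] x0 yD] chamber_nz[OF C0 phi(1)] chamber_nz[OF D phi(1)] by blast
    moreover have "aff_eval phi x0 * aff_eval phi y = (s * (s - 1)) * (L * L)" unfolding ax0 ay by (simp add: algebra_simps)
    moreover have "(s * (s - 1)) * (L * L) \<ge> 0" using s1 by simp
    ultimately show False by linarith
  qed
  have "ht R C0 (aff_refl phi ` D) = ht R C0 D + 1" by (rule ht_step[OF C0 D phi(1) zphi zcl' rho loc nsep])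
  then have "hyp phi \<inter> closure D \<in> cfaces R C0 D" using face unfolding cfaces_def by blast
  then obtain psi where psi: "psi \<in> set X" "hyp phi \<inter> closure D = hyp psi \<inter> closure D" using cf by auto
  have psiA: "psi \<in> A" using psi XA by blast
  have "z \<in> hyp psi" using psi(2) zphi zcl' by blast
  then have "hyp psi \<inter> ball z \<rho> \<noteq> {}" using rho by auto
  then have "hyp psi = hyp phi" using loc psiA by blast
  then obtain cc where cc: "cc \<noteq> 0" "fst phi = cc *\<^sub>R fst psi" using prop_hyp[OF psiA phi(1)] by metis
  define a where "a = fst psi"
  have na: "norm a > 0" using grad_nz[OF psiA] by (simp add: a_def)
  have nb: "norm b = \<bar>cc\<bar> * norm a" using cc by (simp add: b_def a_def)
  have Lc: "\<bar>L\<bar> = \<bar>cc\<bar> * \<bar>a \<bullet> d\<bar>" using cc by (simp add: L_def b_def a_def abs_mult)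
  have lower: "norm b * r / 2 \<le> \<bar>aff_eval phi y\<bar>"
  proof (rule ccontr)
    assume "\<not> ?thesis"
    then have lt: "\<bar>aff_eval phi y\<bar> < norm b * r / 2" by simp
    have nbp: "norm b > 0" using grad_nz[OF phi(1)] by (simp add: b_def)
    define y' where "y' = y - (aff_eval phi y / (b \<bullet> b)) *\<^sub>R b"
    have bb: "b \<bullet> b = norm b * norm b" by (simp add: power2_norm_eq_inner[symmetric] power2_eq_square)
    have "aff_eval phi y' = aff_eval phi y - (aff_eval phi y / (b \<bullet> b)) * (b \<bullet> b)"
      by (simp add: y'_def aff_eq b_def inner_diff_right algebra_simps)
    then have a0: "aff_eval phi y' = 0" using nbp bb by simp
    have "dist y y' = \<bar>aff_eval phi y / (b \<bullet> b)\<bar> * norm b" by (simp add: y'_def dist_norm)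
    also have "\<dots> = \<bar>aff_eval phi y\<bar> / norm b" using nbp bb by (simp add: abs_divide)
    also have "\<dots> < r / 2" using lt nbp by (simp add: field_simps)
    finally have "dist y y' < r / 2" .
    then have "dist c y' < r" using yU dist_triangle[of c y' y] by simp
    then have "y' \<in> D" using c by auto
    then show False using chamber_nz[OF D phi(1)] a0 by blast
  qed
  have sy: "(s - 1) * norm d \<le> \<delta>"
  proof -
    have "z - y = (s - 1) *\<^sub>R d" by (simp add: z_def d_def algebra_simps)
    then have "norm (z - y) = (s - 1) * norm d" using s1 by simp
    then have "dist y z = (s - 1) * norm d" by (simp add: dist_norm norm_minus_commute)
    moreover have "y \<in> closure D" using yD closure_subset by blast
    ultimately show ?thesis using diam zcl' by metis
  qed
  have upper: "\<bar>a \<bullet> d\<bar> \<le> norm a * (\<delta> + K)"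
  proof -
    have "aff_dim (hyp psi \<inter> closure D) = int DIM('a) - 1" using faces psi(1) by (simp add: is_face_hyp_def)
    moreover have "int DIM('a) - 1 \<ge> 0" using DIM_positive[where 'a='a] by linarith
    ultimately have "hyp psi \<inter> closure D \<noteq> {}" by (metis aff_dim_empty_eq neg_0_le_iff_le not_one_le_zero)
    then obtain q where q: "q \<in> hyp psi" "q \<in> closure D" by blast
    have "aff_eval psi y = a \<bullet> (y - q)" using q(1) by (simp add: hyp_iff aff_eq a_def inner_diff_right)
    then have "\<bar>aff_eval psi y\<bar> \<le> norm a * dist y q"
      using Cauchy_Schwarz_ineq2[of a "y - q"] by (simp add: dist_norm)
    also have "\<dots> \<le> norm a * \<delta>" using diam q(2) yD closure_subset na by (intro mult_left_mono) auto
    finally have h1: "\<bar>aff_eval psi y\<bar> \<le> norm a * \<delta>" .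
    have "\<bar>aff_eval psi x0\<bar> / norm a \<le> K" using K[OF psi(1)] by (simp add: a_def)
    then have h2: "\<bar>aff_eval psi x0\<bar> \<le> norm a * K" using na by (simp add: field_simps)
    have "a \<bullet> d = aff_eval psi y - aff_eval psi x0" by (simp add: aff_eq a_def d_def inner_diff_right)
    then have "\<bar>a \<bullet> d\<bar> \<le> \<bar>aff_eval psi y\<bar> + \<bar>aff_eval psi x0\<bar>" by simp
    then show ?thesis using h1 h2 by (simp add: distrib_left)
  qed
  have nd0: "norm d \<ge> 0" by simp
  have step1: "norm b * r / 2 \<le> (s - 1) * \<bar>L\<bar>" using lower ay s1 by (simp add: abs_mult)
  have step2: "norm b * r / 2 * norm d \<le> \<bar>L\<bar> * \<delta>"
  proof -
    have "norm b * r / 2 * norm d \<le> (s - 1) * \<bar>L\<bar> * norm d" using step1 nd0 by (rule mult_right_mono)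
    also have "\<dots> = \<bar>L\<bar> * ((s - 1) * norm d)" by simp
    also have "\<dots> \<le> \<bar>L\<bar> * \<delta>" using sy by (intro mult_left_mono) auto
    finally show ?thesis .
  qed
  have ca: "\<bar>cc\<bar> * norm a > 0" using cc(1) na by simp
  have step3: "(\<bar>cc\<bar> * norm a) * (r / 2 * norm d) \<le> (\<bar>cc\<bar> * norm a) * (\<delta> * (\<delta> + K))"
  proof -
    have "(\<bar>cc\<bar> * norm a) * (r / 2 * norm d) = norm b * r / 2 * norm d" using nb by simp
    also have "\<dots> \<le> \<bar>L\<bar> * \<delta>" by (rule step2)
    also have "\<dots> = \<bar>cc\<bar> * \<bar>a \<bullet> d\<bar> * \<delta>" using Lc by simp
    also have "\<dots> \<le> \<bar>cc\<bar> * (norm a * (\<delta> + K)) * \<delta>" using upper dpos by (intro mult_right_mono mult_left_mono) auto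
    also have "\<dots> = (\<bar>cc\<bar> * norm a) * (\<delta> * (\<delta> + K))" by simp
    finally show ?thesis .
  qed
  then have "r / 2 * norm d \<le> \<delta> * (\<delta> + K)" using mult_le_cancel_left_pos[OF ca] by blast
  then have ndle: "norm d \<le> 2 * \<delta> * (\<delta> + K) / r" using rpos by (simp add: field_simps)
  have "dist x0 y \<ge> M" using far yD by (auto simp: not_less[symmetric])
  then have "norm d \<ge> M" by (simp add: d_def dist_norm norm_minus_commute)
  then show False using ndle by (simp add: M_def)
qed

end
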